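(* Let $(U,\tau_R,\rho)$ be a general ordered topological approximation space and $A$ a non-empty finite subset of $U$. Then for every $j\in\{\alpha,P\}$ we have $\eta_{Inc}(A)\le\eta_{jInc}(A)$ and $\eta_{Dec}(A)\le\eta_{jDec}(A)$, where $$\eta_{Inc}(A)=\frac{|\underline{R}_{Inc}(A)|}{|\overline{R}^{Inc}(A)|},\quad \eta_{Dec}(A)=\frac{|\underline{R}_{Dec}(A)|}{|\overline{R}^{Dec}(A)|},\quad \eta_{jInc}(A)=\frac{|\underline{j}_{Inc}(A)|}{|\overline{j}^{Inc}(A)|},\quad \eta_{jDec}(A)=\frac{|\underline{j}_{Dec}(A)|}{|\overline{j}^{Dec}(A)|}.$$
   Context: A general ordered topological approximation space (GOTAS) is a triple $(U,\tau_R,\rho)$ where $U$ is a non-empty set, $R$ is a binary relation on $U$, $\tau_R$ is a topology on $U$ generated by $R$, and $\rho$ is a partial order on $U$. A subset $A\subseteq U$ is increasing (resp. decreasing) if whenever $a\in A$, $x\in U$ and $a\,\rho\,x$ (resp. $x\,\rho\,a$), then $x\in A$. For $A\subseteq U$: $\underline{R}_{Inc}(A)$ is the greatest subset of $A$ that is both $\tau_R$-open and increasing; $\underline{R}_{Dec}(A)$ is the greatest subset of $A$ that is $\tau_R$-open and decreasing; $\overline{R}^{Inc}(A)$ is the smallest superset of $A$ that is $\tau_R$-closed and increasing; $\overline{R}^{Dec}(A)$ is the smallest superset of $A$ that is $\tau_R$-closed and decreasing. With $D\in\{Inc,Dec\}$: $\underline{\alpha}_{D}(A)=A\cap\underline{R}_{D}(\overline{R}^{D}(\underline{R}_{D}(A)))$,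 $\overline{\alpha}^{D}(A)=A\cup\overline{R}^{D}(\underline{R}_{D}(\overline{R}^{D}(A)))$, $\underline{P}_{D}(A)=A\cap\underline{R}_{D}(\overline{R}^{D}(A))$, $\overline{P}^{D}(A)=A\cup\overline{R}^{D}(\underline{R}_{D}(A))$. $|X|$ denotes the cardinality of $X$. *)

theory Defs
  imports "HOL-Analysis.Analysis"
begin

definition is_increasing :: "'a set \<Rightarrow> 'a rel \<Rightarrow> 'a set \<Rightarrow> bool" where
  "is_increasing U \<rho> A \<longleftrightarrow> (\<forall>a\<in>A. \<forall>x\<in>U. (a, x) \<in> \<rho> \<longrightarrow> x \<in> A)"

definition is_decreasing :: "'a set \<Rightarrow> 'a rel \<Rightarrow> 'a set \<Rightarrow> bool" where
  "is_decreasing U \<rho> A \<longleftrightarrow> (\<forall>a\<in>A. \<forall>x\<in>U. (x, a) \<in> \<rho> \<longrightarrow> x \<in> A)"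

(* Generic lower / upper approximations; Q is the monotonicity predicate
   (is_increasing U rho or is_decreasing U rho). *)
definition lowR :: "'a topology \<Rightarrow> ('a set \<Rightarrow> bool) \<Rightarrow> 'a set \<Rightarrow> 'a set" where
  "lowR T Q A = (GREATEST G. G \<subseteq> A \<and> openin T G \<and> Q G)"

definition uppR :: "'a topology \<Rightarrow> ('a set \<Rightarrow> bool) \<Rightarrow> 'a set \<Rightarrow> 'a set" where
  "uppR T Q A = (LEAST F. A \<subseteq> F \<and> closedin T F \<and> Q F)"

definition lowAlpha :: "'a topology \<Rightarrow> ('a set \<Rightarrow> bool) \<Rightarrow> 'a set \<Rightarrow> 'a set" where
  "lowAlpha T Q A = A \<inter> lowR T Q (uppR T Q (lowR T Q A))"

definition uppAlpha :: "'a topology \<Rightarrow> ('a set \<Rightarrow> bool) \<Rightarrow> 'a set \<Rightarrow> 'a set" where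
  "uppAlpha T Q A = A \<union> uppR T Q (lowR T Q (uppR T Q A))"

definition lowP :: "'a topology \<Rightarrow> ('a set \<Rightarrow> bool) \<Rightarrow> 'a set \<Rightarrow> 'a set" where
  "lowP T Q A = A \<inter> lowR T Q (uppR T Q A)"

definition uppP :: "'a topology \<Rightarrow> ('a set \<Rightarrow> bool) \<Rightarrow> 'a set \<Rightarrow> 'a set" where
  "uppP T Q A = A \<union> uppR T Q (lowR T Q A)"

definition eta :: "('a set \<Rightarrow> 'a set) \<Rightarrow> ('a set \<Rightarrow> 'a set) \<Rightarrow> 'a set \<Rightarrow> real" where
  "eta low upp A = real (card (low A)) / real (card (upp A))"

end

theory Submission
  imports Defs
begin

locale QC =
  fixes T :: "'a topology" and Q :: "'a set \<Rightarrow> bool"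
  assumes QU: "\<And>K. (\<forall>S\<in>K. Q S) \<Longrightarrow> Q (\<Union>K)"
    and QI: "\<And>K. K \<noteq> {} \<Longrightarrow> (\<forall>S\<in>K. Q S) \<Longrightarrow> Q (\<Inter>K)"
    and QT: "Q (topspace T)"
begin

lemma lowR_eq: "lowR T Q X = \<Union>{G. G \<subseteq> X \<and> openin T G \<and> Q G}"
  unfolding lowR_def
  by (rule Greatest_equality) (auto intro!: QU)

lemma uppR_eq: assumes "X \<subseteq> topspace T"
  shows "uppR T Q X = \<Inter>{F. X \<subseteq> F \<and> closedin T F \<and> Q F}"
  unfolding uppR_def
proof (rule Least_equality)
  have ne: "{F. X \<subseteq> F \<and> closedin T F \<and> Q F} \<noteq> {}" using assms QT by auto
  show "X \<subseteq> \<Inter>{F. X \<subseteq> F \<and> closedin T F \<and> Q F} \<and>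
    closedin T (\<Inter>{F. X \<subseteq> F \<and> closedin T F \<and> Q F}) \<and> Q (\<Inter>{F. X \<subseteq> F \<and> closedin T F \<and> Q F})"
    using ne by (auto intro!: QI closedin_Inter)
qed auto

lemma lowR_sub: "lowR T Q X \<subseteq> X" by (auto simp: lowR_eq)
lemma lowR_max: "G \<subseteq> X \<Longrightarrow> openin T G \<Longrightarrow> Q G \<Longrightarrow> G \<subseteq> lowR T Q X"
  by (auto simp: lowR_eq)
lemma lowR_props: "openin T (lowR T Q X) \<and> Q (lowR T Q X)"
  by (auto simp: lowR_eq intro!: QU)
lemma lowR_top: "lowR T Q X \<subseteq> topspace T"
  using lowR_props openin_subset by blast
lemma uppR_sup: "X \<subseteq> topspace T \<Longrightarrow> X \<subseteq> uppR T Q X" by (auto simp: uppR_eq)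
lemma uppR_min: "X \<subseteq> topspace T \<Longrightarrow> X \<subseteq> F \<Longrightarrow> closedin T F \<Longrightarrow> Q F \<Longrightarrow> uppR T Q X \<subseteq> F"
  by (auto simp: uppR_eq)
lemma uppR_props: assumes "X \<subseteq> topspace T" shows "closedin T (uppR T Q X) \<and> Q (uppR T Q X)"
proof -
  have ne: "{F. X \<subseteq> F \<and> closedin T F \<and> Q F} \<noteq> {}" using assms QT by auto
  show ?thesis using ne assms by (auto simp: uppR_eq intro!: QI closedin_Inter)
qed

lemma alpha: assumes "A \<subseteq> topspace T"
  shows "lowR T Q A \<subseteq> lowAlpha T Q A \<and> lowAlpha T Q A \<subseteq> A
       \<and> A \<subseteq> uppAlpha T Q A \<and> uppAlpha T Q A \<subseteq> uppR T Q A"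
proof -
  have a: "lowR T Q A \<subseteq> uppR T Q (lowR T Q A)"
    by (rule uppR_sup[OF lowR_top])
  have b: "lowR T Q A \<subseteq> lowR T Q (uppR T Q (lowR T Q A))"
    by (rule lowR_max[OF a]) (use lowR_props in auto)
  have c: "lowR T Q (uppR T Q A) \<subseteq> uppR T Q A"
    by (rule lowR_sub)
  have d: "uppR T Q (lowR T Q (uppR T Q A)) \<subseteq> uppR T Q A"
    by (rule uppR_min[OF lowR_top c]) (use uppR_props[OF assms] in auto)
  show ?thesis using b d lowR_sub[of A] uppR_sup[OF assms]
    unfolding lowAlpha_def uppAlpha_def by auto
qed

lemma Pp: assumes "A \<subseteq> topspace T"
  shows "lowR T Q A \<subseteq> lowP T Q A \<and> lowP T Q A \<subseteq> A
       \<and> A \<subseteq> uppP T Q A \<and> uppP T Q A \<subseteq> uppR T Q A"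
proof -
  have a: "A \<subseteq> uppR T Q A" by (rule uppR_sup[OF assms])
  have b: "lowR T Q A \<subseteq> lowR T Q (uppR T Q A)"
    by (rule lowR_max) (use a lowR_sub[of A] lowR_props in auto)
  have d: "uppR T Q (lowR T Q A) \<subseteq> uppR T Q A"
    by (rule uppR_min[OF lowR_top]) (use a lowR_sub[of A] uppR_props[OF assms] in auto)
  show ?thesis using b d lowR_sub[of A] a
    unfolding lowP_def uppP_def by auto
qed

end

lemma eta_le:
  assumes "L \<subseteq> L'" "L' \<subseteq> A" "A \<subseteq> H'" "H' \<subseteq> H" "finite A" "A \<noteq> {}"
  shows "real (card L) / real (card H) \<le> real (card L') / real (card H')"
proof (cases "finite H")
  case False then show ?thesis by simp
next
  case True
  have fH': "finite H'" using True assms(4) finite_subset by blast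
  have "card A \<le> card H'" using card_mono[OF fH' assms(3)] .
  moreover have "card A > 0" using assms(5,6) by (simp add: card_gt_0_iff)
  ultimately have p: "0 < real (card H')" by simp
  have "card L \<le> card L'" using card_mono[OF finite_subset[OF assms(2,5)] assms(1)] .
  moreover have "card H' \<le> card H" using card_mono[OF True assms(4)] .
  ultimately show ?thesis by (intro frac_le) (use p in auto)
qed

lemma QC_inc: assumes "topspace T = U" shows "QC T (is_increasing U \<rho>)"
  by unfold_locales (auto simp: is_increasing_def assms)

lemma QC_dec: assumes "topspace T = U" shows "QC T (is_decreasing U \<rho>)"
  by unfold_locales (auto simp: is_decreasing_def assms)

theorem proposition3p17:
  fixes U :: "'a set" and T :: "'a topology" and \<rho> :: "'a rel" and A :: "'a set"
  assumes "U \<noteq> {}"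
    and "topspace T = U"
    and "partial_order_on U \<rho>"
    and "A \<subseteq> U" and "A \<noteq> {}" and "finite A"
  shows "eta (lowR T (is_increasing U \<rho>)) (uppR T (is_increasing U \<rho>)) A
           \<le> eta (lowAlpha T (is_increasing U \<rho>)) (uppAlpha T (is_increasing U \<rho>)) A
       \<and> eta (lowR T (is_decreasing U \<rho>)) (uppR T (is_decreasing U \<rho>)) A
           \<le> eta (lowAlpha T (is_decreasing U \<rho>)) (uppAlpha T (is_decreasing U \<rho>)) A
       \<and> eta (lowR T (is_increasing U \<rho>)) (uppR T (is_increasing U \<rho>)) A
           \<le> eta (lowP T (is_increasing U \<rho>)) (uppP T (is_increasing U \<rho>)) A
       \<and> eta (lowR T (is_decreasing U \<rho>)) (uppR T (is_decreasing U \<rho>)) A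
           \<le> eta (lowP T (is_decreasing U \<rho>)) (uppP T (is_decreasing U \<rho>)) A"
proof -
  have AT: "A \<subseteq> topspace T" using assms by simp
  note I = QC.alpha[OF QC_inc[OF assms(2)] AT, of \<rho>] QC.Pp[OF QC_inc[OF assms(2)] AT, of \<rho>]
  note D = QC.alpha[OF QC_dec[OF assms(2)] AT, of \<rho>] QC.Pp[OF QC_dec[OF assms(2)] AT, of \<rho>]
  show ?thesis unfolding eta_def
    apply (intro conjI)
       apply (rule eta_le[OF _ _ _ _ assms(6,5)]; use I(1) in blast)
      apply (rule eta_le[OF _ _ _ _ assms(6,5)]; use D(1) in blast)
     apply (rule eta_le[OF _ _ _ _ assms(6,5)]; use I(2) in blast)
    apply (rule eta_le[OF _ _ _ _ assms(6,5)]; use D(2) in blast)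
    done
qed

end
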